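(* For any signature $\Sigma$, any $\Sigma$-forest-like alphabets $A_1,A_2$ and any reduced $\Sigma$-forest $f$, $$\theta_{A_1,A_2}\big(r_{A_1\mathbin{+\!\!+}A_2}(E_f)\big)=(r_{A_1}\otimes r_{A_2})(\Delta E_f).$$
   Context: $\mathbb K$ is a field of characteristic zero; $[P]$ is $1$ if $P$ holds, $0$ otherwise. A signature is a set $\Sigma$ with arity map $|\cdot|:\Sigma\to\mathbb N$, $\Sigma(n)$ the elements of arity $n$. A $\Sigma$-term is the leaf $\bot$ or $s(t_1,\dots,t_n)$ with $s\in\Sigma(n)$, $t_i$ terms; degree = number of internal nodes, arity $|t|$ = number of leaves. $T(\Sigma)$ is the free operad: $t[t_1,\dots,t_{|t|}]$ grafts $t_i$ on the $i$-th leaf of $t$. A $\Sigma$-forest is a finite word of terms; reduced if no term is $\bot$; $\mathrm{rd}$ deletes terms equal to $\bot$. Internal nodes of a forest $f$ are identified with $1,\dots,\deg f$ by preorder; $d_f(i)$ is the decoration of $i$; $i\to^f_j i'$ means $i'$ is the $j$-th child of $i$; roots are the roots of the terms. $\mathbf N(T(\Sigma))$: basis $E_f$ ($f$ reduced forest), product $E_{f_1}E_{f_2}=E_{f_1f_2}$, coproduct the algebra morphism with $\Delta E_t=\sum E_{\mathrm{rd}(t')}\otimes E_{\mathrm{rd}(t_1\cdots t_{|t'|})}$ over all $t',t_1,\dots$ with $t=t'[t_1,\dots,t_{|t'|}]$. A $\Sigma$-forest-like alphabet is a set $A$ with arbitrary: subset $R^A$, subsets $D^A_s$ ($s\in\Sigma$),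 binary relations $\to^A_j$ ($j\ge1$). $\mathbb K\langle A\rangle$: noncommutative polynomials over $A$ with possibly infinite support but bounded degree. A word $w\in A^*$ is $A$-compatible with $f$ if it has length $\deg f$, $w(i)\in R^A$ for each root $i$, $w(i)\in D^A_{d_f(i)}$ for each node $i$, and $i\to^f_j i'$ implies $w(i)\to^A_j w(i')$. $r_A(E_f)=\sum_{w\in A^*}[w\ A\text{-compatible with }f]\,w$, extended linearly. The disjoint sum $A_1\mathbin{+\!\!+}A_2$ is $A_1\sqcup A_2$ with $R=R^{A_1}\sqcup R^{A_2}$, $D_s=D^{A_1}_s\sqcup D^{A_2}_s$, and $a\to_j a'$ iff ($a,a'\in A_1$, $a\to^{A_1}_j a'$) or ($a,a'\in A_2$, $a\to^{A_2}_j a'$) or ($a\in A_1$, $a'\in A_2$, $a'\in R^{A_2}$). $\theta_{A_1,A_2}:\mathbb K\langle A_1\sqcup A_2\rangle\to\mathbb K\langle A_1\rangle\otimes\mathbb K\langle A_2\rangle$ is the linear map $w\mapsto w_{|A_1}\otimes w_{|A_2}$ ($w_{|B}$ the subword of letters in $B$). *)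

theory Defs
  imports Main
begin

text \<open>A signature is a set S of symbols (of type 's) with an arity map ar.
  Terms: the leaf Leaf (written bot in the paper) or Node s [t1,...,tn].\<close>

datatype 's trm = Leaf | Node 's "'s trm list"

fun wf_trm :: "'s set \<Rightarrow> ('s \<Rightarrow> nat) \<Rightarrow> 's trm \<Rightarrow> bool" where
  "wf_trm S ar Leaf = True"
| "wf_trm S ar (Node s ts) = (s \<in> S \<and> length ts = ar s \<and> list_all (wf_trm S ar) ts)"

fun deg :: "'s trm \<Rightarrow> nat" where
  "deg Leaf = 0"
| "deg (Node s ts) = Suc (sum_list (map deg ts))"

fun nleaves :: "'s trm \<Rightarrow> nat" where
  "nleaves Leaf = 1"
| "nleaves (Node s ts) = sum_list (map nleaves ts)"

fun graft :: "'s trm \<Rightarrow> 's trm list \<Rightarrow> 's trm"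
and graft_l :: "'s trm list \<Rightarrow> 's trm list \<Rightarrow> 's trm list" where
  "graft Leaf us = hd us"
| "graft (Node s ts) us = Node s (graft_l ts us)"
| "graft_l [] us = []"
| "graft_l (t # ts) us = graft t (take (nleaves t) us) # graft_l ts (drop (nleaves t) us)"

type_synonym 's forest = "'s trm list"

definition fdeg :: "'s forest \<Rightarrow> nat" where
  "fdeg f = sum_list (map deg f)"

definition reduced :: "'s set \<Rightarrow> ('s \<Rightarrow> nat) \<Rightarrow> 's forest \<Rightarrow> bool" where
  "reduced S ar f \<longleftrightarrow> (\<forall>t\<in>set f. wf_trm S ar t \<and> t \<noteq> Leaf)"

definition rd :: "'s forest \<Rightarrow> 's forest" where
  "rd f = filter (\<lambda>t. t \<noteq> Leaf) f"

section \<open>Preorder numbering of internal nodes (0-based)\<close>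

fun pre :: "'s trm \<Rightarrow> 's list" where
  "pre Leaf = []"
| "pre (Node s ts) = s # concat (map pre ts)"

definition fdec :: "'s forest \<Rightarrow> 's list" where
  "fdec f = concat (map pre f)"

text \<open>Child edges (i, j, i'): node i' is the j-th child (j \<ge> 1) of node i.
  edges_t n t: edges of term t whose root has number n;
  edges_l p n j ts: edges from parent p to the children ts (the first of which is its
  j-th child, numbered from n), together with the edges inside these children.\<close>
fun edges_t :: "nat \<Rightarrow> 's trm \<Rightarrow> (nat \<times> nat \<times> nat) set"
and edges_l :: "nat \<Rightarrow> nat \<Rightarrow> nat \<Rightarrow> 's trm list \<Rightarrow> (nat \<times> nat \<times> nat) set" where
  "edges_t n Leaf = {}"
| "edges_t n (Node s ts) = edges_l n (Suc n) 1 ts"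
| "edges_l p n j [] = {}"
| "edges_l p n j (t # ts) =
     (if t = Leaf then {} else {(p, j, n)}) \<union> edges_t n t \<union> edges_l p (n + deg t) (Suc j) ts"

fun fedges_aux :: "nat \<Rightarrow> 's forest \<Rightarrow> (nat \<times> nat \<times> nat) set" where
  "fedges_aux n [] = {}"
| "fedges_aux n (t # ts) = edges_t n t \<union> fedges_aux (n + deg t) ts"

definition fedges :: "'s forest \<Rightarrow> (nat \<times> nat \<times> nat) set" where
  "fedges f = fedges_aux 0 f"

fun froots_aux :: "nat \<Rightarrow> 's forest \<Rightarrow> nat set" where
  "froots_aux n [] = {}"
| "froots_aux n (t # ts) = (if t = Leaf then {} else {n}) \<union> froots_aux (n + deg t) ts"

definition froots :: "'s forest \<Rightarrow> nat set" where
  "froots f = froots_aux 0 f"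

record ('a, 's) fl_alphabet =
  fl_carrier :: "'a set"
  fl_R :: "'a set"
  fl_D :: "'s \<Rightarrow> 'a set"
  fl_arr :: "nat \<Rightarrow> 'a \<Rightarrow> 'a \<Rightarrow> bool"

definition forest_like :: "'s set \<Rightarrow> ('a, 's) fl_alphabet \<Rightarrow> bool" where
  "forest_like S A \<longleftrightarrow> fl_R A \<subseteq> fl_carrier A \<and> (\<forall>s\<in>S. fl_D A s \<subseteq> fl_carrier A) \<and>
     (\<forall>j a a'. fl_arr A j a a' \<longrightarrow> a \<in> fl_carrier A \<and> a' \<in> fl_carrier A)"

definition compatible :: "('a, 's) fl_alphabet \<Rightarrow> 's forest \<Rightarrow> 'a list \<Rightarrow> bool" where
  "compatible A f w \<longleftrightarrow> length w = fdeg f \<and> set w \<subseteq> fl_carrier A \<and>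
     (\<forall>i\<in>froots f. w ! i \<in> fl_R A) \<and>
     (\<forall>i<fdeg f. w ! i \<in> fl_D A (fdec f ! i)) \<and>
     (\<forall>(i, j, i')\<in>fedges f. fl_arr A j (w ! i) (w ! i'))"

text \<open>Elements of K<A> are represented by their coefficient functions on words.
  r_A(E_f) = sum of all A-compatible words.\<close>
definition rA :: "('a, 's) fl_alphabet \<Rightarrow> 's forest \<Rightarrow> 'a list \<Rightarrow> 'k::field_char_0" where
  "rA A f w = (if compatible A f w then 1 else 0)"

definition fl_sum :: "('a, 's) fl_alphabet \<Rightarrow> ('b, 's) fl_alphabet \<Rightarrow> ('a + 'b, 's) fl_alphabet" where
  "fl_sum A1 A2 =
    \<lparr> fl_carrier = Inl ` fl_carrier A1 \<union> Inr ` fl_carrier A2,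
      fl_R = Inl ` fl_R A1 \<union> Inr ` fl_R A2,
      fl_D = (\<lambda>s. Inl ` fl_D A1 s \<union> Inr ` fl_D A2 s),
      fl_arr = (\<lambda>j x y. case (x, y) of
          (Inl a, Inl a') \<Rightarrow> fl_arr A1 j a a'
        | (Inr b, Inr b') \<Rightarrow> fl_arr A2 j b b'
        | (Inl a, Inr b) \<Rightarrow> a \<in> fl_carrier A1 \<and> b \<in> fl_carrier A2 \<and> b \<in> fl_R A2
        | (Inr b, Inl a) \<Rightarrow> False) \<rparr>"

definition projl :: "('a + 'b) list \<Rightarrow> 'a list" where
  "projl w = List.map_filter (case_sum Some (\<lambda>_. None)) w"

definition projr :: "('a + 'b) list \<Rightarrow> 'b list" where
  "projr w = List.map_filter (case_sum (\<lambda>_. None) Some) w"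

text \<open>theta: w \<mapsto> w|A1 \<otimes> w|A2; elements of the (completed) tensor product are
  represented by their coefficient functions on pairs of words.\<close>
definition theta :: "(('a + 'b) list \<Rightarrow> 'k::field_char_0) \<Rightarrow> ('a list \<times> 'b list \<Rightarrow> 'k)" where
  "theta P = (\<lambda>(u, v). \<Sum>w\<in>{w. projl w = u \<and> projr w = v}. P w)"

text \<open>Elements of N \<otimes> N are represented by finitely supported coefficient functions on
  pairs of (reduced) forests: X = sum X(g,h) E_g \<otimes> E_h.\<close>

definition tmul :: "('s forest \<times> 's forest \<Rightarrow> 'k::field_char_0) \<Rightarrow> ('s forest \<times> 's forest \<Rightarrow> 'k)
    \<Rightarrow> ('s forest \<times> 's forest \<Rightarrow> 'k)" where
  "tmul X Y = (\<lambda>(g, h). \<Sum>i\<le>length g. \<Sum>j\<le>length h.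
       X (take i g, take j h) * Y (drop i g, drop j h))"

definition tone :: "'s forest \<times> 's forest \<Rightarrow> 'k::field_char_0" where
  "tone = (\<lambda>(g, h). if g = [] \<and> h = [] then 1 else 0)"

definition decomps :: "'s set \<Rightarrow> ('s \<Rightarrow> nat) \<Rightarrow> 's trm \<Rightarrow> ('s trm \<times> 's trm list) set" where
  "decomps S ar t = {(t', ts). wf_trm S ar t' \<and> list_all (wf_trm S ar) ts \<and>
       length ts = nleaves t' \<and> graft t' ts = t}"

definition Delta_t :: "'s set \<Rightarrow> ('s \<Rightarrow> nat) \<Rightarrow> 's trm \<Rightarrow> ('s forest \<times> 's forest \<Rightarrow> 'k::field_char_0)" where
  "Delta_t S ar t = (\<lambda>(g, h). of_nat (card {(t', ts) \<in> decomps S ar t. rd [t'] = g \<and> rd ts = h}))"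

text \<open>Delta is an algebra morphism: Delta E_(t1...tk) = Delta E_t1 \<cdots> Delta E_tk.\<close>
definition Delta :: "'s set \<Rightarrow> ('s \<Rightarrow> nat) \<Rightarrow> 's forest \<Rightarrow> ('s forest \<times> 's forest \<Rightarrow> 'k::field_char_0)" where
  "Delta S ar f = foldr (\<lambda>t acc. tmul (Delta_t S ar t) acc) f tone"

definition rtensor :: "('a, 's) fl_alphabet \<Rightarrow> ('b, 's) fl_alphabet
    \<Rightarrow> ('s forest \<times> 's forest \<Rightarrow> 'k::field_char_0) \<Rightarrow> ('a list \<times> 'b list \<Rightarrow> 'k)" where
  "rtensor A1 A2 X = (\<lambda>(u, v). \<Sum>p\<in>{p. X p \<noteq> 0}. X p * rA A1 (fst p) u * rA A2 (snd p) v)"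

end

theory Submission
  imports Defs
begin

fun cT :: "('a, 's) fl_alphabet \<Rightarrow> ('a \<Rightarrow> bool) \<Rightarrow> 's trm \<Rightarrow> 'a list \<Rightarrow> bool"
and cL :: "('a, 's) fl_alphabet \<Rightarrow> 'a \<Rightarrow> nat \<Rightarrow> 's trm list \<Rightarrow> 'a list \<Rightarrow> bool" where
  "cT A P Leaf w = (w = [])"
| "cT A P (Node s ts) w = (case w of [] \<Rightarrow> False
     | a # w' \<Rightarrow> a \<in> fl_carrier A \<and> a \<in> fl_D A s \<and> P a \<and> cL A a 1 ts w')"
| "cL A a j [] w = (w = [])"
| "cL A a j (t # ts) w = (cT A (fl_arr A j a) t (take (deg t) w) \<and> cL A a (Suc j) ts (drop (deg t) w))"

fun cF :: "('a, 's) fl_alphabet \<Rightarrow> 's trm list \<Rightarrow> 'a list \<Rightarrow> bool" where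
  "cF A [] w = (w = [])"
| "cF A (t # ts) w = (cT A (\<lambda>x. x \<in> fl_R A) t (take (deg t) w) \<and> cF A ts (drop (deg t) w))"

fun dsz :: "'s trm \<Rightarrow> nat" and dszl :: "'s trm list \<Rightarrow> nat" where
  "dsz Leaf = 0" | "dsz (Node s ts) = Suc (dszl ts)" | "dszl [] = 0" | "dszl (t # ts) = dsz t + dszl ts"

lemma len_pre[simp]: "length (pre t) = deg t"
  by (induct t rule: pre.induct) (auto simp: length_concat o_def intro!: arg_cong[where f=sum_list] map_cong)

lemma c_len: "cT A P t w \<Longrightarrow> length w = deg t" "cL A a j ts w \<Longrightarrow> length w = sum_list (map deg ts)"
proof (induct t and ts arbitrary: P w and a j w rule: dsz_dszl.induct)
  case (2 s ts) then show ?case by (cases w) auto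
next
  case (4 t ts)
  have c: "cT A (fl_arr A j a) t (take (deg t) w)" "cL A a (Suc j) ts (drop (deg t) w)" using 4(3) by simp_all
  have "length (take (deg t) w) = deg t" by (rule 4(1)[OF c(1)])
  moreover have "length (drop (deg t) w) = sum_list (map deg ts)" by (rule 4(2)[OF c(2)])
  ultimately show ?case by (cases "deg t \<le> length w") (auto simp: min_def)
qed auto

lemma cF_len: "cF A f w \<Longrightarrow> length w = fdeg f"
proof (induct f arbitrary: w)
  case (Cons t f)
  have c: "cT A (\<lambda>x. x \<in> fl_R A) t (take (deg t) w)" "cF A f (drop (deg t) w)" using Cons(2) by simp_all
  have "length (take (deg t) w) = deg t" by (rule c_len(1)[OF c(1)])
  moreover have "length (drop (deg t) w) = fdeg f" by (rule Cons(1)[OF c(2)])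
  ultimately show ?case by (cases "deg t \<le> length w") (auto simp: min_def fdeg_def)
qed (simp add: fdeg_def)

definition GT where "GT A P n t W \<longleftrightarrow> (t \<noteq> Leaf \<longrightarrow> P (W ! n)) \<and>
   (\<forall>k<deg t. W ! (n + k) \<in> fl_carrier A \<and> W ! (n + k) \<in> fl_D A (pre t ! k)) \<and>
   (\<forall>(i, j, i')\<in>edges_t n t. fl_arr A j (W ! i) (W ! i'))"
definition GL where "GL A p j n ts W \<longleftrightarrow>
   (\<forall>k<sum_list (map deg ts). W ! (n + k) \<in> fl_carrier A \<and> W ! (n + k) \<in> fl_D A (concat (map pre ts) ! k)) \<and>
   (\<forall>(i, j', i')\<in>edges_l p n j ts. fl_arr A j' (W ! i) (W ! i'))"

lemma all_less_add: "(\<forall>k::nat<a+b. Q k) \<longleftrightarrow> (\<forall>k<a. Q k) \<and> (\<forall>k<b. Q (a + k))"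
proof safe
  fix k assume 1: "\<forall>k<a. Q k" and 2: "\<forall>k<b. Q (a + k)" and k: "k < a + b"
  show "Q k"
  proof (cases "k < a")
    case True with 1 show ?thesis by simp
  next
    case False
    then have "k = a + (k - a)" "k - a < b" using k by simp_all
    then show ?thesis using 2 by metis
  qed
qed simp_all

lemma all_less_Suc0: "(\<forall>k<Suc b. Q k) \<longleftrightarrow> Q 0 \<and> (\<forall>k<b. Q (Suc k))"
  using less_Suc_eq_0_disj by auto

lemma G_equiv:
  "n + deg t \<le> length W \<Longrightarrow> GT A P n t W \<longleftrightarrow> cT A P t (take (deg t) (drop n W))"
  "n + sum_list (map deg ts) \<le> length W \<Longrightarrow> GL A p j n ts W \<longleftrightarrow> cL A (W ! p) j ts (take (sum_list (map deg ts)) (drop n W))"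
proof (induct t and ts arbitrary: P n and p j n rule: dsz_dszl.induct)
  case 1 then show ?case by (simp add: GT_def)
next
  case (2 s ts)
  have d: "take (deg (Node s ts)) (drop n W) = W ! n # take (sum_list (map deg ts)) (drop (Suc n) W)"
    using 2(2) by (simp add: Cons_nth_drop_Suc[symmetric])
  have "GT A P n (Node s ts) W \<longleftrightarrow> P (W ! n) \<and> W ! n \<in> fl_carrier A \<and> W ! n \<in> fl_D A s \<and> GL A n 1 (Suc n) ts W"
    unfolding GT_def GL_def by (simp only: deg.simps all_less_Suc0) (simp add: conj_ac)
  also have "\<dots> \<longleftrightarrow> cT A P (Node s ts) (take (deg (Node s ts)) (drop n W))"
  proof -
    have l: "Suc n + sum_list (map deg ts) \<le> length W" using 2(2) by simp
    show ?thesis unfolding d cT.simps list.case 2(1)[OF l] by blast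
  qed
  finally show ?case .
next
  case 3 then show ?case by (simp add: GL_def)
next
  case (4 t ts)
  have e: "GL A p j n (t # ts) W \<longleftrightarrow> GT A (fl_arr A j (W ! p)) n t W \<and> GL A p (Suc j) (n + deg t) ts W"
  proof -
    have q: "(\<forall>k<sum_list (map deg (t # ts)). W ! (n + k) \<in> fl_carrier A \<and> W ! (n + k) \<in> fl_D A (concat (map pre (t # ts)) ! k))
      \<longleftrightarrow> (\<forall>k<deg t. W ! (n + k) \<in> fl_carrier A \<and> W ! (n + k) \<in> fl_D A (pre t ! k)) \<and>
          (\<forall>k<sum_list (map deg ts). W ! (n + deg t + k) \<in> fl_carrier A \<and> W ! (n + deg t + k) \<in> fl_D A (concat (map pre ts) ! k))"
    proof -
      have a: "k < deg t \<Longrightarrow> (pre t @ concat (map pre ts)) ! k = pre t ! k" for k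
        by (simp add: nth_append)
      have b: "(pre t @ concat (map pre ts)) ! (deg t + k) = concat (map pre ts) ! k" for k
        by (metis len_pre nth_append_length_plus)
      show ?thesis
      unfolding list.map sum_list.Cons all_less_add concat.simps
      using a b by (auto simp: add.assoc)
    qed
    have ed: "edges_l p n j (t # ts) = (if t = Leaf then {} else {(p, j, n)}) \<union> edges_t n t \<union> edges_l p (n + deg t) (Suc j) ts"
      by (rule edges_l.simps(2))
    show ?thesis unfolding GT_def GL_def q ed ball_Un by (cases "t = Leaf") (simp_all add: conj_ac)
  qed
  have t1: "take (deg t) (take (sum_list (map deg (t # ts))) (drop n W)) = take (deg t) (drop n W)" by simp
  have t2: "drop (deg t) (take (sum_list (map deg (t # ts))) (drop n W)) = take (sum_list (map deg ts)) (drop (n + deg t) W)"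
    by (simp add: drop_take add.commute)
  have l1: "n + deg t \<le> length W" "n + deg t + sum_list (map deg ts) \<le> length W" using 4(3) by simp_all
  show ?case unfolding e cL.simps t1 t2 using 4(1)[OF l1(1)] 4(2)[OF l1(2)] by simp
qed


definition GF where "GF A n f W \<longleftrightarrow> (\<forall>i\<in>froots_aux n f. W ! i \<in> fl_R A) \<and>
   (\<forall>k<sum_list (map deg f). W ! (n + k) \<in> fl_carrier A \<and> W ! (n + k) \<in> fl_D A (concat (map pre f) ! k)) \<and>
   (\<forall>(i, j, i')\<in>fedges_aux n f. fl_arr A j (W ! i) (W ! i'))"

lemma GF_equiv: "n + sum_list (map deg f) \<le> length W \<Longrightarrow> GF A n f W \<longleftrightarrow> cF A f (take (sum_list (map deg f)) (drop n W))"
proof (induct f arbitrary: n)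
  case Nil then show ?case by (simp add: GF_def)
next
  case (Cons t ts)
  have e: "GF A n (t # ts) W \<longleftrightarrow> GT A (\<lambda>x. x \<in> fl_R A) n t W \<and> GF A (n + deg t) ts W"
  proof -
    have a: "k < deg t \<Longrightarrow> (pre t @ concat (map pre ts)) ! k = pre t ! k" for k
      by (simp add: nth_append)
    have b: "(pre t @ concat (map pre ts)) ! (deg t + k) = concat (map pre ts) ! k" for k
      by (metis len_pre nth_append_length_plus)
    have q: "(\<forall>k<sum_list (map deg (t # ts)). W ! (n + k) \<in> fl_carrier A \<and> W ! (n + k) \<in> fl_D A (concat (map pre (t # ts)) ! k))
      \<longleftrightarrow> (\<forall>k<deg t. W ! (n + k) \<in> fl_carrier A \<and> W ! (n + k) \<in> fl_D A (pre t ! k)) \<and>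
          (\<forall>k<sum_list (map deg ts). W ! (n + deg t + k) \<in> fl_carrier A \<and> W ! (n + deg t + k) \<in> fl_D A (concat (map pre ts) ! k))"
      unfolding list.map sum_list.Cons all_less_add concat.simps
      using a b by (auto simp: add.assoc)
    have r: "froots_aux n (t # ts) = (if t = Leaf then {} else {n}) \<union> froots_aux (n + deg t) ts" by simp
    have ed: "fedges_aux n (t # ts) = edges_t n t \<union> fedges_aux (n + deg t) ts" by simp
    show ?thesis unfolding GT_def GF_def q ed r ball_Un by (cases "t = Leaf") (simp_all add: conj_ac)
  qed
  have t1: "take (deg t) (take (sum_list (map deg (t # ts))) (drop n W)) = take (deg t) (drop n W)" by simp
  have t2: "drop (deg t) (take (sum_list (map deg (t # ts))) (drop n W)) = take (sum_list (map deg ts)) (drop (n + deg t) W)"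
    by (simp add: drop_take add.commute)
  have l1: "n + deg t \<le> length W" "n + deg t + sum_list (map deg ts) \<le> length W" using Cons(2) by simp_all
  show ?case unfolding e cF.simps t1 t2 using G_equiv(1)[OF l1(1)] Cons(1)[OF l1(2)] by simp
qed

lemma compatible_cF: "compatible A f w \<longleftrightarrow> cF A f w"
proof
  assume c: "compatible A f w"
  then have l: "length w = sum_list (map deg f)" by (simp add: compatible_def fdeg_def)
  have s: "\<forall>k<length w. w ! k \<in> fl_carrier A" using c unfolding compatible_def by (metis nth_mem subsetD)
  have "GF A 0 f w" using c s l unfolding compatible_def GF_def froots_def fedges_def fdec_def fdeg_def by simp
  then show "cF A f w" using GF_equiv[of 0 f w A] l by simp
next
  assume c: "cF A f w"
  then have l: "length w = sum_list (map deg f)" using cF_len by (simp add: fdeg_def)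
  then have g: "GF A 0 f w" using GF_equiv[of 0 f w A] c by simp
  have "set w \<subseteq> fl_carrier A"
  proof
    fix x assume "x \<in> set w"
    then obtain k where "k < length w" "w ! k = x" by (auto simp: in_set_conv_nth)
    then show "x \<in> fl_carrier A" using g l unfolding GF_def by auto
  qed
  then show "compatible A f w" using g l unfolding compatible_def GF_def froots_def fedges_def fdec_def fdeg_def by simp
qed

lemma cF_rd: "cF A (rd f) w \<longleftrightarrow> cF A f w"
  by (induct f arbitrary: w) (auto simp: rd_def)

lemma cF_append: "cF A (xs @ ys) w \<longleftrightarrow> cF A xs (take (sum_list (map deg xs)) w) \<and> cF A ys (drop (sum_list (map deg xs)) w)"
proof (induct xs arbitrary: w)
  case (Cons t xs)
  have 1: "take (deg t) (take (deg t + sum_list (map deg xs)) w) = take (deg t) w" by simp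
  have 2: "drop (deg t) (take (deg t + sum_list (map deg xs)) w) = take (sum_list (map deg xs)) (drop (deg t) w)"
    by (simp add: drop_take)
  have 3: "drop (sum_list (map deg xs)) (drop (deg t) w) = drop (deg t + sum_list (map deg xs)) w"
    by (simp add: add.commute)
  show ?case unfolding append_Cons cF.simps list.map sum_list.Cons 1 2 Cons[of "drop (deg t) w"] 3 by simp
qed simp

lemma cT_cong: "(\<And>a. a \<in> fl_carrier A \<Longrightarrow> P a \<longleftrightarrow> Q a) \<Longrightarrow> cT A P t w \<longleftrightarrow> cT A Q t w"
  by (cases t; cases w) auto


fun ilv :: "bool list \<Rightarrow> 'a list \<Rightarrow> 'b list \<Rightarrow> ('a + 'b) list" where
  "ilv [] u v = []"
| "ilv (b # m) u v = (if b then Inl (hd u) # ilv m (tl u) v else Inr (hd v) # ilv m u (tl v))"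

lemma ilv_len[simp]: "length (ilv m u v) = length m"
  by (induct m arbitrary: u v) auto

lemma ilv_isl[simp]: "map isl (ilv m u v) = m"
  by (induct m arbitrary: u v) auto

lemma projl_Cons[simp]: "projl (Inl a # w) = a # projl w" "projl (Inr b # w) = projl w"
  by (simp_all add: projl_def map_filter_simps)
lemma projr_Cons[simp]: "projr (Inl a # w) = projr w" "projr (Inr b # w) = b # projr w"
  by (simp_all add: projr_def map_filter_simps)
lemma proj_Nil[simp]: "projl [] = []" "projr [] = []"
  by (simp_all add: projl_def projr_def map_filter_simps)

lemma projl_ilv: "length u = length (filter id m) \<Longrightarrow> projl (ilv m u v) = u"
  by (induct m arbitrary: u v) (auto simp: length_Suc_conv)

lemma projr_ilv: "length v = length (filter Not m) \<Longrightarrow> projr (ilv m u v) = v"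
  by (induct m arbitrary: u v) (auto simp: length_Suc_conv)

lemma ilv_proj: "ilv (map isl w) (projl w) (projr w) = w"
proof (induct w)
  case (Cons x w) then show ?case by (cases x) auto
qed simp

lemma ilv_append: "length u1 = length (filter id m1) \<Longrightarrow> length v1 = length (filter Not m1) \<Longrightarrow>
  ilv (m1 @ m2) (u1 @ u2) (v1 @ v2) = ilv m1 u1 v1 @ ilv m2 u2 v2"
  by (induct m1 arbitrary: u1 v1) (auto simp: length_Suc_conv)

lemma ilv_false: "length v = n \<Longrightarrow> ilv (replicate n False) u v = map Inr v"
  by (induct n arbitrary: v) (auto simp: length_Suc_conv)

fun maskT :: "'s trm \<Rightarrow> 's trm list \<Rightarrow> bool list"
and maskL :: "'s trm list \<Rightarrow> 's trm list \<Rightarrow> bool list" where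
  "maskT Leaf us = replicate (deg (hd us)) False"
| "maskT (Node s ts) us = True # maskL ts us"
| "maskL [] us = []"
| "maskL (t # ts) us = maskT t (take (nleaves t) us) @ maskL ts (drop (nleaves t) us)"

lemma graft_l_len[simp]: "length (graft_l ts us) = length ts"
  by (induct ts arbitrary: us) auto

lemma mask_len:
  "length us = nleaves t \<Longrightarrow> length (maskT t us) = deg (graft t us) \<and>
     length (filter id (maskT t us)) = deg t \<and> length (filter Not (maskT t us)) = sum_list (map deg us)"
  "length us = sum_list (map nleaves ts) \<Longrightarrow> length (maskL ts us) = sum_list (map deg (graft_l ts us)) \<and>
     length (filter id (maskL ts us)) = sum_list (map deg ts) \<and> length (filter Not (maskL ts us)) = sum_list (map deg us)"
proof (induct t us and ts us rule: graft_graft_l.induct)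
  case (1 us) then show ?case by (cases us) auto
next
  case (4 t ts us)
  have "sum_list (map deg us) = sum_list (map deg (take (nleaves t) us)) + sum_list (map deg (drop (nleaves t) us))"
    by (metis append_take_drop_id map_append sum_list_append)
  with 4 show ?case by (auto simp: min_def)
qed auto


fun cutT :: "'s trm \<Rightarrow> bool list \<Rightarrow> 's trm \<times> 's trm list"
and cutL :: "'s trm list \<Rightarrow> bool list \<Rightarrow> 's trm list \<times> 's trm list" where
  "cutT Leaf m = (Leaf, [Leaf])"
| "cutT (Node s ts) m = (if m \<noteq> [] \<and> hd m then (Node s (fst (cutL ts (tl m))), snd (cutL ts (tl m))) else (Leaf, [Node s ts]))"
| "cutL [] m = ([], [])"
| "cutL (t # ts) m = (fst (cutT t (take (deg t) m)) # fst (cutL ts (drop (deg t) m)),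
                      snd (cutT t (take (deg t) m)) @ snd (cutL ts (drop (deg t) m)))"

lemma cut_mask:
  "length us = nleaves t \<Longrightarrow> cutT (graft t us) (maskT t us) = (t, us)"
  "length us = sum_list (map nleaves ts) \<Longrightarrow> cutL (graft_l ts us) (maskL ts us) = (ts, us)"
proof (induct t us and ts us rule: graft_graft_l.induct)
  case (1 us)
  then obtain x where us: "us = [x]" by (cases us) auto
  show ?case by (cases x) (auto simp: us)
next
  case (4 t ts us)
  have l: "length (maskT t (take (nleaves t) us)) = deg (graft t (take (nleaves t) us))"
    using mask_len(1)[of "take (nleaves t) us" t] 4(3) by simp
  show ?case using 4 l by simp
qed auto

lemma wf_graft:
  "wf_trm S ar (graft t us) \<Longrightarrow> length us = nleaves t \<Longrightarrow> wf_trm S ar t \<and> list_all (wf_trm S ar) us"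
  "list_all (wf_trm S ar) (graft_l ts us) \<Longrightarrow> length us = sum_list (map nleaves ts) \<Longrightarrow> list_all (wf_trm S ar) ts \<and> list_all (wf_trm S ar) us"
proof (induct t us and ts us rule: graft_graft_l.induct)
  case (1 us) then show ?case by (cases us) auto
next
  case (4 t ts us)
  have p: "wf_trm S ar (graft t (take (nleaves t) us))" "list_all (wf_trm S ar) (graft_l ts (drop (nleaves t) us))"
    using 4(3) by simp_all
  have l: "length (take (nleaves t) us) = nleaves t" "length (drop (nleaves t) us) = sum_list (map nleaves ts)"
    using 4(4) by simp_all
  have a: "wf_trm S ar t \<and> list_all (wf_trm S ar) (take (nleaves t) us)" by (rule 4(1)[OF p(1) l(1)])
  have b: "list_all (wf_trm S ar) ts \<and> list_all (wf_trm S ar) (drop (nleaves t) us)" by (rule 4(2)[OF p(2) l(2)])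
  have "list_all (wf_trm S ar) us" using a b by (metis append_take_drop_id list_all_append)
  then show ?case using a b by simp
qed auto

abbreviation (input) "Sg A1 A2 \<equiv> fl_sum A1 A2"

lemma sum_simps[simp]:
  "Inl a \<in> fl_carrier (fl_sum A1 A2) \<longleftrightarrow> a \<in> fl_carrier A1"
  "Inr b \<in> fl_carrier (fl_sum A1 A2) \<longleftrightarrow> b \<in> fl_carrier A2"
  "Inl a \<in> fl_R (fl_sum A1 A2) \<longleftrightarrow> a \<in> fl_R A1"
  "Inr b \<in> fl_R (fl_sum A1 A2) \<longleftrightarrow> b \<in> fl_R A2"
  "Inl a \<in> fl_D (fl_sum A1 A2) s \<longleftrightarrow> a \<in> fl_D A1 s"
  "Inr b \<in> fl_D (fl_sum A1 A2) s \<longleftrightarrow> b \<in> fl_D A2 s"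
  "fl_arr (fl_sum A1 A2) j (Inl a) (Inl a') \<longleftrightarrow> fl_arr A1 j a a'"
  "fl_arr (fl_sum A1 A2) j (Inr b) (Inr b') \<longleftrightarrow> fl_arr A2 j b b'"
  "fl_arr (fl_sum A1 A2) j (Inl a) (Inr b) \<longleftrightarrow> a \<in> fl_carrier A1 \<and> b \<in> fl_carrier A2 \<and> b \<in> fl_R A2"
  "fl_arr (fl_sum A1 A2) j (Inr b) (Inl a) \<longleftrightarrow> False"
  by (auto simp: fl_sum_def)

lemma cInr:
  "cT (fl_sum A1 A2) P t (map Inr v) \<longleftrightarrow> cT A2 (\<lambda>b. P (Inr b)) t v"
  "cL (fl_sum A1 A2) (Inr b) j ts (map Inr v) \<longleftrightarrow> cL A2 b j ts v"
proof (induct t and ts arbitrary: P v and b j v rule: dsz_dszl.induct)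
  case (2 s ts) then show ?case by (cases v) auto
next
  case (4 t ts)
  have e: "(\<lambda>b'. fl_arr (fl_sum A1 A2) j (Inr b) (Inr b')) = fl_arr A2 j b" by auto
  show ?case using 4(1)[of "fl_arr (fl_sum A1 A2) j (Inr b)"] 4(2) by (simp add: take_map drop_map e)
qed auto


lemma M:
  "length us = nleaves t \<Longrightarrow> length u = deg t \<Longrightarrow> length v = sum_list (map deg us) \<Longrightarrow>
   cT (fl_sum A1 A2) P (graft t us) (ilv (maskT t us) u v) \<longleftrightarrow>
   (if t = Leaf then cT A2 (\<lambda>b. P (Inr b)) (hd us) v else cT A1 (\<lambda>a. P (Inl a)) t u \<and> cF A2 us v)"
  "length us = sum_list (map nleaves ts) \<Longrightarrow> length u = sum_list (map deg ts) \<Longrightarrow> length v = sum_list (map deg us) \<Longrightarrow>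
   a \<in> fl_carrier A1 \<Longrightarrow>
   cL (fl_sum A1 A2) (Inl a) j (graft_l ts us) (ilv (maskL ts us) u v) \<longleftrightarrow> cL A1 a j ts u \<and> cF A2 us v"
proof (induct t us and ts us arbitrary: P u v and a j u v rule: graft_graft_l.induct)
  case (1 us)
  then obtain x where us: "us = [x]" by (cases us) auto
  show ?case using 1 by (simp add: us ilv_false cInr)
next
  case (2 s ts us)
  then obtain a u' where u: "u = a # u'" by (cases u) auto
  show ?case
  proof (cases "a \<in> fl_carrier A1")
    case True
    then show ?thesis using 2 by (simp add: u)
  next
    case False
    then show ?thesis by (simp add: u)
  qed
next
  case (3 us)
  then show ?case by simp
next
  case (4 t ts us)
  define us1 where "us1 = take (nleaves t) us"
  define us2 where "us2 = drop (nleaves t) us"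
  define u1 where "u1 = take (deg t) u"
  define u2 where "u2 = drop (deg t) u"
  define v1 where "v1 = take (sum_list (map deg us1)) v"
  define v2 where "v2 = drop (sum_list (map deg us1)) v"
  have lus1: "length us1 = nleaves t" and lus2: "length us2 = sum_list (map nleaves ts)"
    using 4(3) by (simp_all add: us1_def us2_def)
  have sus: "sum_list (map deg us) = sum_list (map deg us1) + sum_list (map deg us2)"
    unfolding us1_def us2_def by (metis append_take_drop_id map_append sum_list_append)
  have lu1: "length u1 = deg t" and lu2: "length u2 = sum_list (map deg ts)" using 4(4) by (simp_all add: u1_def u2_def)
  have lv1: "length v1 = sum_list (map deg us1)" and lv2: "length v2 = sum_list (map deg us2)"
    using 4(5) sus by (simp_all add: v1_def v2_def)
  have ml: "length (maskT t us1) = deg (graft t us1)" "length (filter id (maskT t us1)) = deg t"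
     "length (filter Not (maskT t us1)) = sum_list (map deg us1)"
    using mask_len(1)[OF lus1] by auto
  have W: "ilv (maskL (t # ts) us) u v = ilv (maskT t us1) u1 v1 @ ilv (maskL ts us2) u2 v2"
  proof -
    have "u = u1 @ u2" "v = v1 @ v2" by (simp_all add: u1_def u2_def v1_def v2_def)
    then show ?thesis using ilv_append[of u1 "maskT t us1" v1] ml lu1 lv1
      by (simp add: us1_def us2_def)
  qed
  have g: "graft_l (t # ts) us = graft t us1 # graft_l ts us2" by (simp add: us1_def us2_def)
  have tk: "take (deg (graft t us1)) (ilv (maskT t us1) u1 v1 @ ilv (maskL ts us2) u2 v2) = ilv (maskT t us1) u1 v1"
    "drop (deg (graft t us1)) (ilv (maskT t us1) u1 v1 @ ilv (maskL ts us2) u2 v2) = ilv (maskL ts us2) u2 v2"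
    using ml(1) by simp_all
  have IH2: "cL (fl_sum A1 A2) (Inl a) (Suc j) (graft_l ts us2) (ilv (maskL ts us2) u2 v2) \<longleftrightarrow> cL A1 a (Suc j) ts u2 \<and> cF A2 us2 v2"
    using 4(2)[OF lus2[unfolded us2_def] lu2 lv2[unfolded us2_def] 4(6)] unfolding us2_def by simp
  have IH1: "cT (fl_sum A1 A2) (fl_arr (fl_sum A1 A2) j (Inl a)) (graft t us1) (ilv (maskT t us1) u1 v1) \<longleftrightarrow>
     (if t = Leaf then cT A2 (\<lambda>b. fl_arr (fl_sum A1 A2) j (Inl a) (Inr b)) (hd us1) v1
      else cT A1 (\<lambda>b. fl_arr (fl_sum A1 A2) j (Inl a) (Inl b)) t u1 \<and> cF A2 us1 v1)"
    using 4(1)[OF lus1[unfolded us1_def] lu1 lv1[unfolded us1_def]] unfolding us1_def by simp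
  have cFs: "cF A2 us v \<longleftrightarrow> cF A2 us1 v1 \<and> cF A2 us2 v2"
  proof -
    have "us = us1 @ us2" by (simp add: us1_def us2_def)
    then show ?thesis using cF_append[of A2 us1 us2 v] by (simp add: v1_def v2_def)
  qed
  have lhs: "cL A1 a j (t # ts) u \<longleftrightarrow> cT A1 (fl_arr A1 j a) t u1 \<and> cL A1 a (Suc j) ts u2"
    by (simp add: u1_def u2_def)
  have T: "cT (fl_sum A1 A2) (fl_arr (fl_sum A1 A2) j (Inl a)) (graft t us1) (ilv (maskT t us1) u1 v1) \<longleftrightarrow>
     cT A1 (fl_arr A1 j a) t u1 \<and> cF A2 us1 v1"
  proof (cases "t = Leaf")
    case True
    then obtain x where us1: "us1 = [x]" using lus1 by (cases us1) auto
    have "u1 = []" using lu1 True by simp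
    moreover have "cT A2 (\<lambda>b. fl_arr (fl_sum A1 A2) j (Inl a) (Inr b)) x v1 \<longleftrightarrow> cT A2 (\<lambda>b. b \<in> fl_R A2) x v1"
      by (rule cT_cong) (simp add: 4(6))
    ultimately show ?thesis using IH1 True lv1 by (simp add: us1)
  next
    case False
    have e: "(\<lambda>b. fl_arr (fl_sum A1 A2) j (Inl a) (Inl b)) = fl_arr A1 j a" by auto
    show ?thesis using IH1 False by (simp add: e)
  qed
  show ?case unfolding W g cL.simps tk IH2 T cFs unfolding u1_def u2_def by blast
qed


lemma allInr:
  "cT (fl_sum A1 A2) P t w \<Longrightarrow> (\<forall>a. \<not> P (Inl a)) \<Longrightarrow> \<forall>y\<in>set w. \<not> isl y"
  "cL (fl_sum A1 A2) x j ts w \<Longrightarrow> \<not> isl x \<Longrightarrow> \<forall>y\<in>set w. \<not> isl y"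
proof (induct t and ts arbitrary: P w and x j w rule: dsz_dszl.induct)
  case (2 s ts)
  then obtain y w' where w: "w = y # w'" by (cases w) auto
  have "\<not> isl y" using 2(2,3) w by (cases y) auto
  then show ?case using 2 w by auto
next
  case (4 t ts)
  have a: "\<forall>y\<in>set (take (deg t) w). \<not> isl y"
    using 4(1)[of "fl_arr (fl_sum A1 A2) j x" "take (deg t) w"] 4(3,4) by (cases x) auto
  have b: "\<forall>y\<in>set (drop (deg t) w). \<not> isl y" using 4(2)[of x "Suc j" "drop (deg t) w"] 4(3,4) by simp
  show ?case using a b by (metis Un_iff append_take_drop_id set_append)
qed auto

lemma ex_dec:
  "cT (fl_sum A1 A2) P t w \<Longrightarrow> \<exists>t' us. length us = nleaves t' \<and> graft t' us = t \<and> maskT t' us = map isl w"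
  "cL (fl_sum A1 A2) x j ts w \<Longrightarrow> isl x \<Longrightarrow> \<exists>cs us. length us = sum_list (map nleaves cs) \<and> graft_l cs us = ts \<and> maskL cs us = map isl w"
proof (induct t and ts arbitrary: P w and x j w rule: dsz_dszl.induct)
  case 1
  then show ?case by (intro exI[of _ Leaf] exI[of _ "[Leaf]"]) simp
next
  case (2 s ts)
  then obtain y w' where w: "w = y # w'" by (cases w) auto
  show ?case
  proof (cases "isl y")
    case True
    have cl: "cL (fl_sum A1 A2) y 1 ts w'" using 2(2) w by simp
    obtain cs us where "length us = sum_list (map nleaves cs)" "graft_l cs us = ts" "maskL cs us = map isl w'"
      using 2(1)[OF cl True] by blast
    then show ?thesis using True w by (intro exI[of _ "Node s cs"] exI[of _ us]) simp
  next
    case False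
    then have "\<forall>y\<in>set w'. \<not> isl y" using 2(2) w allInr(2)[of A1 A2 y 1 ts w'] by simp
    then have "map isl w = replicate (length w) False" using False w by (simp add: map_replicate_const[symmetric] cong: map_cong)
    moreover have "length w = deg (Node s ts)" using 2(2) by (rule c_len)
    ultimately show ?thesis by (intro exI[of _ Leaf] exI[of _ "[Node s ts]"]) simp
  qed
next
  case 3 then show ?case by (intro exI[of _ "[]"]) simp
next
  case (4 t ts)
  obtain t1 us1 where 1: "length us1 = nleaves t1" "graft t1 us1 = t" "maskT t1 us1 = map isl (take (deg t) w)"
    using 4(1)[of "fl_arr (fl_sum A1 A2) j x" "take (deg t) w"] 4(3) by auto
  obtain cs us2 where 2: "length us2 = sum_list (map nleaves cs)" "graft_l cs us2 = ts" "maskL cs us2 = map isl (drop (deg t) w)"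
    using 4(2)[of x "Suc j" "drop (deg t) w"] 4(3,4) by auto
  show ?case
    apply (rule exI[of _ "t1 # cs"], rule exI[of _ "us1 @ us2"])
    using 1 2 by (simp flip: map_append)
qed

definition good :: "'s trm \<Rightarrow> 's trm \<times> 's trm list \<Rightarrow> bool" where
  "good t d \<longleftrightarrow> length (snd d) = nleaves (fst d) \<and> graft (fst d) (snd d) = t"

definition fmask :: "('s trm \<times> 's trm list) list \<Rightarrow> bool list" where
  "fmask ds = concat (map (\<lambda>d. maskT (fst d) (snd d)) ds)"

lemma ex_decF: "cF (fl_sum A1 A2) f w \<Longrightarrow> \<exists>ds. list_all2 good f ds \<and> fmask ds = map isl w"
proof (induct f arbitrary: w)
  case Nil then show ?case by (simp add: fmask_def)
next
  case (Cons t f)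
  obtain t' us where 1: "length us = nleaves t'" "graft t' us = t" "maskT t' us = map isl (take (deg t) w)"
    using ex_dec(1) Cons(2) by fastforce
  obtain ds where 2: "list_all2 good f ds" "fmask ds = map isl (drop (deg t) w)"
    using Cons by auto
  have gd: "good t (t', us)" using 1 by (simp add: good_def)
  show ?case
    apply (intro exI[of _ "(t', us) # ds"])
    using 1 2 gd by (simp add: fmask_def flip: map_append)
qed

lemma FM: "list_all2 good f ds \<Longrightarrow> length u = sum_list (map deg (map fst ds)) \<Longrightarrow>
   length v = sum_list (map deg (concat (map snd ds))) \<Longrightarrow>
   cF (fl_sum A1 A2) f (ilv (fmask ds) u v) \<longleftrightarrow> cF A1 (map fst ds) u \<and> cF A2 (concat (map snd ds)) v"
proof (induct ds arbitrary: f u v)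
  case Nil then show ?case by (simp add: fmask_def)
next
  case (Cons d ds)
  obtain t f' where f: "f = t # f'" using Cons(2) by (cases f) auto
  obtain t' us where d: "d = (t', us)" by (cases d)
  have gd: "good t d" "list_all2 good f' ds" using Cons(2) f by simp_all
  have g: "length us = nleaves t'" "graft t' us = t" "list_all2 good f' ds" using gd by (simp_all add: d good_def)
  define u1 where "u1 = take (deg t') u"
  define u2 where "u2 = drop (deg t') u"
  define v1 where "v1 = take (sum_list (map deg us)) v"
  define v2 where "v2 = drop (sum_list (map deg us)) v"
  have lu: "length u1 = deg t'" "length u2 = sum_list (map deg (map fst ds))" using Cons(3) by (simp_all add: d u1_def u2_def)
  have lv: "length v1 = sum_list (map deg us)" "length v2 = sum_list (map deg (concat (map snd ds)))"
    using Cons(4) by (simp_all add: d v1_def v2_def)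
  have ml: "length (maskT t' us) = deg t" "length (filter id (maskT t' us)) = deg t'"
     "length (filter Not (maskT t' us)) = sum_list (map deg us)"
    using mask_len(1)[OF g(1)] g(2) by auto
  have W: "ilv (fmask (d # ds)) u v = ilv (maskT t' us) u1 v1 @ ilv (fmask ds) u2 v2"
  proof -
    have "u = u1 @ u2" "v = v1 @ v2" by (simp_all add: u1_def u2_def v1_def v2_def)
    then show ?thesis using ilv_append[of u1 "maskT t' us" v1] ml lu lv by (simp add: d fmask_def)
  qed
  have IH: "cF (fl_sum A1 A2) f' (ilv (fmask ds) u2 v2) \<longleftrightarrow> cF A1 (map fst ds) u2 \<and> cF A2 (concat (map snd ds)) v2"
    using Cons(1)[OF g(3) lu(2) lv(2)] .
  have T: "cT (fl_sum A1 A2) (\<lambda>x. x \<in> fl_R (fl_sum A1 A2)) t (ilv (maskT t' us) u1 v1) \<longleftrightarrow> cT A1 (\<lambda>x. x \<in> fl_R A1) t' u1 \<and> cF A2 us v1"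
  proof (cases "t' = Leaf")
    case True
    then obtain x where us: "us = [x]" using g(1) by (cases us) auto
    show ?thesis using M(1)[OF g(1) lu(1) lv(1), of A1 A2 "\<lambda>x. x \<in> fl_R (fl_sum A1 A2)"] True lu(1) lv(1) g(2)
      by (simp add: us)
  next
    case False
    show ?thesis using M(1)[OF g(1) lu(1) lv(1), of A1 A2 "\<lambda>x. x \<in> fl_R (fl_sum A1 A2)"] False g(2) by simp
  qed
  have R: "cF A1 (map fst (d # ds)) u \<longleftrightarrow> cT A1 (\<lambda>x. x \<in> fl_R A1) t' u1 \<and> cF A1 (map fst ds) u2"
    by (simp add: d u1_def u2_def)
  have R2: "cF A2 (concat (map snd (d # ds))) v \<longleftrightarrow> cF A2 us v1 \<and> cF A2 (concat (map snd ds)) v2"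
    using cF_append[of A2 us "concat (map snd ds)" v] by (simp add: d v1_def v2_def)
  have L: "cF (fl_sum A1 A2) f (ilv (fmask (d # ds)) u v) \<longleftrightarrow>
     cT (fl_sum A1 A2) (\<lambda>x. x \<in> fl_R (fl_sum A1 A2)) t (ilv (maskT t' us) u1 v1) \<and> cF (fl_sum A1 A2) f' (ilv (fmask ds) u2 v2)"
    unfolding W f cF.simps using ml(1) by simp
  show ?case unfolding L T IH R R2 by blast
qed


lemma good_mask_inj: "good t d1 \<Longrightarrow> good t d2 \<Longrightarrow> maskT (fst d1) (snd d1) = maskT (fst d2) (snd d2) \<Longrightarrow> d1 = d2"
  using cut_mask(1) unfolding good_def by (metis prod.collapse)

lemma finite_good: "finite {d. good t d}"
proof (rule inj_on_finite[where f = "\<lambda>d. maskT (fst d) (snd d)"])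
  show "inj_on (\<lambda>d. maskT (fst d) (snd d)) {d. good t d}"
    by (rule inj_onI, rule good_mask_inj) auto
  show "(\<lambda>d. maskT (fst d) (snd d)) ` {d. good t d} \<subseteq> {m. set m \<subseteq> UNIV \<and> length m = deg t}"
    using mask_len(1) by (auto simp: good_def)
  show "finite {m::bool list. set m \<subseteq> UNIV \<and> length m = deg t}"
    by (rule finite_lists_length_eq) simp
qed

lemma decomps_sub: "decomps S ar t \<subseteq> {d. good t d}"
  by (auto simp: decomps_def good_def)

lemma finite_decomps: "finite (decomps S ar t)"
  using finite_subset[OF decomps_sub finite_good] .

lemma decomps_eq: "wf_trm S ar t \<Longrightarrow> decomps S ar t = {d. good t d}"
  using wf_graft(1) by (fastforce simp: decomps_def good_def)

definition Dset :: "'s set \<Rightarrow> ('s \<Rightarrow> nat) \<Rightarrow> 's forest \<Rightarrow> ('s trm \<times> 's trm list) list set" where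
  "Dset S ar f = {ds. list_all2 (\<lambda>t d. d \<in> decomps S ar t) f ds}"

lemma Dset_Nil: "Dset S ar [] = {[]}"
  by (auto simp: Dset_def)

lemma Dset_Cons: "Dset S ar (t # f) = (\<lambda>(d, ds). d # ds) ` (decomps S ar t \<times> Dset S ar f)"
  by (auto simp: Dset_def list_all2_Cons1)

lemma finite_Dset: "finite (Dset S ar f)"
  by (induct f) (auto simp: Dset_Nil Dset_Cons finite_decomps)

definition K1 :: "('s trm \<times> 's trm list) list \<Rightarrow> 's forest" where "K1 ds = rd (map fst ds)"
definition K2 :: "('s trm \<times> 's trm list) list \<Rightarrow> 's forest" where "K2 ds = rd (concat (map snd ds))"

lemma K_Cons: "K1 (d # ds) = rd [fst d] @ K1 ds" "K2 (d # ds) = rd (snd d) @ K2 ds"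
  by (simp_all add: K1_def K2_def rd_def)

lemma K_Nil: "K1 [] = []" "K2 [] = []" by (simp_all add: K1_def K2_def rd_def)

lemma Delta_card: "(Delta S ar f (g, h) :: 'k::field_char_0) = of_nat (card {ds \<in> Dset S ar f. K1 ds = g \<and> K2 ds = h})"
proof (induct f arbitrary: g h)
  case Nil
  have e: "{ds. ds = [] \<and> K1 ds = [] \<and> K2 ds = []} = {[]}" by (auto simp: K_Nil)
  show ?case by (auto simp: Delta_def tone_def Dset_Nil K_Nil e)
next
  case (Cons t f)
  note IH = Cons.hyps
  define A where "A i j = {d \<in> decomps S ar t. rd [fst d] = take i g \<and> rd (snd d) = take j h}" for i j
  define B where "B i j = {ds \<in> Dset S ar f. K1 ds = drop i g \<and> K2 ds = drop j h}" for i j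
  define P where "P = {..length g} \<times> {..length h}"
  have At: "(Delta_t S ar t (take i g, take j h) :: 'k) = of_nat (card (A i j))" for i j
    unfolding Delta_t_def A_def by (simp add: split_beta case_prod_beta' conj_ac)
  have lhs: "(Delta S ar (t # f) (g, h) :: 'k) = (\<Sum>p\<in>P. of_nat (card (A (fst p) (snd p) \<times> B (fst p) (snd p))))"
  proof -
    have "(Delta S ar (t # f) (g, h) :: 'k) = (\<Sum>i\<le>length g. \<Sum>j\<le>length h. Delta_t S ar t (take i g, take j h) * Delta S ar f (drop i g, drop j h))"
      by (simp add: Delta_def tmul_def)
    also have "\<dots> = (\<Sum>i\<le>length g. \<Sum>j\<le>length h. of_nat (card (A i j)) * of_nat (card (B i j)))"
      by (simp only: At IH B_def)
    also have "\<dots> = (\<Sum>p\<in>P. of_nat (card (A (fst p) (snd p) \<times> B (fst p) (snd p))))"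
      unfolding P_def sum.cartesian_product card_cartesian_product by (simp add: split_beta)
    finally show ?thesis .
  qed
  have fin: "finite (A i j \<times> B i j)" for i j
    using finite_decomps[of S ar t] finite_Dset[of S ar f] by (auto simp: A_def B_def)
  have disj: "p \<in> P \<Longrightarrow> q \<in> P \<Longrightarrow> p \<noteq> q \<Longrightarrow> (A (fst p) (snd p) \<times> B (fst p) (snd p)) \<inter> (A (fst q) (snd q) \<times> B (fst q) (snd q)) = {}" for p q
  proof -
    assume pq: "p \<in> P" "q \<in> P" "p \<noteq> q"
    show ?thesis
    proof (rule ccontr)
      assume "(A (fst p) (snd p) \<times> B (fst p) (snd p)) \<inter> (A (fst q) (snd q) \<times> B (fst q) (snd q)) \<noteq> {}"
      then obtain d where "d \<in> A (fst p) (snd p)" "d \<in> A (fst q) (snd q)" by auto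
      then have "take (fst p) g = take (fst q) g" "take (snd p) h = take (snd q) h" by (auto simp: A_def)
      then have "length (take (fst p) g) = length (take (fst q) g)" "length (take (snd p) h) = length (take (snd q) h)" by simp_all
      then have "fst p = fst q" "snd p = snd q" using pq by (auto simp: P_def min_def split: if_splits)
      then show False using pq(3) by (simp add: prod_eq_iff)
    qed
  qed
  have seteq: "{ds \<in> Dset S ar (t # f). K1 ds = g \<and> K2 ds = h} = (\<lambda>(d, ds). d # ds) ` (\<Union>p\<in>P. A (fst p) (snd p) \<times> B (fst p) (snd p))"
  proof (rule set_eqI, rule iffI)
    fix x assume "x \<in> {ds \<in> Dset S ar (t # f). K1 ds = g \<and> K2 ds = h}"
    then obtain d ds where x: "x = d # ds" "d \<in> decomps S ar t" "ds \<in> Dset S ar f" "rd [fst d] @ K1 ds = g" "rd (snd d) @ K2 ds = h"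
      by (auto simp: Dset_Cons K_Cons)
    define i where "i = length (rd [fst d])"
    define j where "j = length (rd (snd d))"
    have "(i, j) \<in> P" using x unfolding P_def i_def j_def by auto
    moreover have "d \<in> A i j" "ds \<in> B i j" using x unfolding A_def B_def i_def j_def by auto
    ultimately show "x \<in> (\<lambda>(d, ds). d # ds) ` (\<Union>p\<in>P. A (fst p) (snd p) \<times> B (fst p) (snd p))"
      using x(1) by (auto intro!: image_eqI[of _ _ "(d, ds)"] bexI[of _ "(i, j)"])
  next
    fix x assume "x \<in> (\<lambda>(d, ds). d # ds) ` (\<Union>p\<in>P. A (fst p) (snd p) \<times> B (fst p) (snd p))"
    then obtain d ds i j where x: "x = d # ds" "d \<in> A i j" "ds \<in> B i j" by auto
    then show "x \<in> {ds \<in> Dset S ar (t # f). K1 ds = g \<and> K2 ds = h}"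
      by (auto simp: A_def B_def Dset_Cons K_Cons)
  qed
  have inj: "inj_on (\<lambda>(d, ds). d # ds) X" for X :: "(('s trm \<times> 's trm list) \<times> ('s trm \<times> 's trm list) list) set"
    by (auto intro!: inj_onI)
  have "card {ds \<in> Dset S ar (t # f). K1 ds = g \<and> K2 ds = h} = (\<Sum>p\<in>P. card (A (fst p) (snd p) \<times> B (fst p) (snd p)))"
    unfolding seteq card_image[OF inj]
    by (rule card_UN_disjoint) (auto simp: P_def fin disj)
  then show ?case unfolding lhs by simp
qed


lemma proj_len: "length (projl w) = length (filter id (map isl w))" "length (projr w) = length (filter Not (map isl w))"
proof (induct w)
  case (Cons x w) { case 1 then show ?case using Cons by (cases x) auto next case 2 then show ?case using Cons by (cases x) auto }
qed simp_all

lemma proj_set: "set w \<subseteq> Inl ` set (projl w) \<union> Inr ` set (projr w)"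
proof (induct w)
  case (Cons x w) then show ?case by (cases x) auto
qed simp

lemma proj_length: "length w = length (projl w) + length (projr w)"
  unfolding proj_len by (induct w) auto

lemma finite_W0: "finite {w. projl w = u \<and> projr w = v}"
proof (rule finite_subset)
  show "{w. projl w = u \<and> projr w = v} \<subseteq> {xs. set xs \<subseteq> Inl ` set u \<union> Inr ` set v \<and> length xs = length u + length v}"
    using proj_set proj_length by blast
  show "finite {xs. set xs \<subseteq> Inl ` set u \<union> Inr ` set v \<and> length xs = length u + length v}"
    by (rule finite_lists_length_eq) simp
qed

lemma fmask_count: "list_all2 good f ds \<Longrightarrow> length (filter id (fmask ds)) = sum_list (map deg (map fst ds)) \<and>
   length (filter Not (fmask ds)) = sum_list (map deg (concat (map snd ds)))"
proof (induct ds arbitrary: f)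
  case Nil then show ?case by (simp add: fmask_def)
next
  case (Cons d ds)
  then obtain t f' where f: "f = t # f'" "good t d" "list_all2 good f' ds" by (cases f) auto
  have "length (snd d) = nleaves (fst d)" using f(2) by (simp add: good_def)
  from mask_len(1)[OF this] Cons(1)[OF f(3)] show ?case by (simp add: fmask_def id_def)
qed

lemma fmask_inj: "list_all2 good f ds1 \<Longrightarrow> list_all2 good f ds2 \<Longrightarrow> fmask ds1 = fmask ds2 \<Longrightarrow> ds1 = ds2"
proof (induct ds1 arbitrary: f ds2)
  case Nil then show ?case by simp
next
  case (Cons d1 ds1)
  then obtain t f' where f: "f = t # f'" "good t d1" "list_all2 good f' ds1" by (cases f) auto
  then obtain d2 ds2' where d2: "ds2 = d2 # ds2'" "good t d2" "list_all2 good f' ds2'" using Cons(3) by (cases ds2) auto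
  have l: "length (maskT (fst d1) (snd d1)) = length (maskT (fst d2) (snd d2))"
    using mask_len(1)[of "snd d1" "fst d1"] mask_len(1)[of "snd d2" "fst d2"] f(2) d2(2) by (simp add: good_def)
  have "maskT (fst d1) (snd d1) = maskT (fst d2) (snd d2)" "fmask ds1 = fmask ds2'"
    using Cons(4) l unfolding d2(1) by (simp_all add: fmask_def)
  then show ?case using good_mask_inj[OF f(2) d2(2)] Cons(1)[OF f(3) d2(3)] d2(1) by simp
qed

lemma Dset_good: "ds \<in> Dset S ar f \<Longrightarrow> list_all2 good f ds"
  unfolding Dset_def using decomps_sub by (auto elim!: list_all2_mono)

lemma good_Dset: "\<forall>t\<in>set f. wf_trm S ar t \<Longrightarrow> list_all2 good f ds \<Longrightarrow> ds \<in> Dset S ar f"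
  unfolding Dset_def by (auto simp: list_all2_conv_all_nth decomps_eq)

lemma compat_rd: "compatible A (rd g) u \<longleftrightarrow> cF A g u"
  by (simp add: compatible_cF cF_rd)

lemma sum_ind: "finite A \<Longrightarrow> (\<Sum>x\<in>A. (if P x then 1 else 0)) = (of_nat (card {x\<in>A. P x}) :: 'k::field_char_0)"
  by (simp add: sum.inter_filter[symmetric])


theorem proposition4p4:
  fixes S :: "'s set" and ar :: "'s \<Rightarrow> nat"
    and A1 :: "('a, 's) fl_alphabet" and A2 :: "('b, 's) fl_alphabet"
    and f :: "'s forest"
  assumes "forest_like S A1" and "forest_like S A2" and "reduced S ar f"
  shows "theta (rA (fl_sum A1 A2) f) =
         (rtensor A1 A2 (Delta S ar f) :: 'a list \<times> 'b list \<Rightarrow> 'k::field_char_0)"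
proof (rule ext)
  fix p :: "'a list \<times> 'b list"
  obtain u v where p: "p = (u, v)" by (cases p)
  have wf: "\<forall>t\<in>set f. wf_trm S ar t" using assms(3) by (simp add: reduced_def)
  define D where "D = Dset S ar f"
  define K where "K ds = (K1 ds, K2 ds)" for ds :: "('s trm \<times> 's trm list) list"
  define X where "X = {ds \<in> D. compatible A1 (K1 ds) u \<and> compatible A2 (K2 ds) v}"
  define W0 where "W0 = {w. projl w = u \<and> projr w = v}"
  define Y where "Y = {w \<in> W0. compatible (fl_sum A1 A2) f w}"
  define \<Phi> where "\<Phi> ds = ilv (fmask ds) u v" for ds :: "('s trm \<times> 's trm list) list"
  have finD: "finite D" unfolding D_def by (rule finite_Dset)
  have finW: "finite W0" unfolding W0_def by (rule finite_W0)
  have L: "theta (rA (fl_sum A1 A2) f) p = (of_nat (card Y) :: 'k)"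
  proof -
    have "theta (rA (fl_sum A1 A2) f) p = (\<Sum>w\<in>W0. (rA (fl_sum A1 A2) f w :: 'k))"
      by (simp add: p theta_def W0_def)
    also have "\<dots> = of_nat (card Y)" unfolding rA_def Y_def by (rule sum_ind[OF finW])
    finally show ?thesis .
  qed
  have Dl: "(Delta S ar f q :: 'k) = of_nat (card {ds \<in> D. K ds = q})" for q
    by (cases q) (simp add: Delta_card D_def K_def)
  have supp: "{q. (Delta S ar f q :: 'k) \<noteq> 0} = K ` D"
  proof -
    have "(Delta S ar f q :: 'k) \<noteq> 0 \<longleftrightarrow> q \<in> K ` D" for q
    proof -
      have "finite {ds \<in> D. K ds = q}" using finD by simp
      then have "card {ds \<in> D. K ds = q} \<noteq> 0 \<longleftrightarrow> {ds \<in> D. K ds = q} \<noteq> {}" by simp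
      then show ?thesis unfolding Dl by auto
    qed
    then show ?thesis by auto
  qed
  define c where "c q = (rA A1 (fst q) u * rA A2 (snd q) v :: 'k)" for q
  have R: "rtensor A1 A2 (Delta S ar f) p = (\<Sum>q\<in>K ` D. (Delta S ar f q :: 'k) * c q)"
    unfolding p rtensor_def supp c_def by (simp add: mult.assoc)
  also have "\<dots> = (\<Sum>q\<in>K ` D. \<Sum>ds\<in>{ds \<in> D. K ds = q}. c (K ds))"
    unfolding Dl by (rule sum.cong) auto
  also have "\<dots> = (\<Sum>ds\<in>D. c (K ds))"
    by (rule sum.group[OF finD]) (use finD in auto)
  also have "\<dots> = (\<Sum>ds\<in>D. if compatible A1 (K1 ds) u \<and> compatible A2 (K2 ds) v then 1 else 0)"
    by (rule sum.cong) (auto simp: c_def K_def rA_def)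
  also have "\<dots> = of_nat (card X)" unfolding X_def by (rule sum_ind[OF finD])
  finally have R': "rtensor A1 A2 (Delta S ar f) p = (of_nat (card X) :: 'k)" .
  have inj: "inj_on \<Phi> X"
  proof (rule inj_onI)
    fix d1 d2 assume d: "d1 \<in> X" "d2 \<in> X" "\<Phi> d1 = \<Phi> d2"
    then have "fmask d1 = fmask d2" unfolding \<Phi>_def by (metis ilv_isl)
    moreover have "list_all2 good f d1" "list_all2 good f d2" using d by (auto simp: X_def D_def Dset_good)
    ultimately show "d1 = d2" using fmask_inj by blast
  qed
  have img: "\<Phi> ` X = Y"
  proof (rule set_eqI, rule iffI)
    fix w assume "w \<in> \<Phi> ` X"
    then obtain ds where ds: "ds \<in> X" "w = \<Phi> ds" by auto
    have g: "list_all2 good f ds" using ds by (auto simp: X_def D_def Dset_good)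
    have c1: "cF A1 (map fst ds) u" and c2: "cF A2 (concat (map snd ds)) v"
      using ds(1) by (auto simp: X_def K1_def K2_def compat_rd)
    have lu: "length u = sum_list (map deg (map fst ds))" using cF_len[OF c1] by (simp add: fdeg_def)
    have lv: "length v = sum_list (map deg (concat (map snd ds)))" using cF_len[OF c2] by (simp add: fdeg_def)
    have a: "length u = length (filter id (fmask ds))" "length v = length (filter Not (fmask ds))"
      using fmask_count[OF g] lu lv by simp_all
    have "projl w = u" "projr w = v" unfolding ds(2) \<Phi>_def
      using projl_ilv[OF a(1)] projr_ilv[OF a(2)] by auto
    moreover have "cF (fl_sum A1 A2) f w" unfolding ds(2) \<Phi>_def using FM[OF g lu lv] c1 c2 by simp
    ultimately show "w \<in> Y" unfolding Y_def W0_def by (simp add: compatible_cF)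
  next
    fix w assume "w \<in> Y"
    then have w: "projl w = u" "projr w = v" "cF (fl_sum A1 A2) f w" by (auto simp: Y_def W0_def compatible_cF)
    obtain ds where ds: "list_all2 good f ds" "fmask ds = map isl w" using ex_decF[OF w(3)] by blast
    have lu: "length u = sum_list (map deg (map fst ds))"
      using proj_len(1)[of w] fmask_count[OF ds(1)] ds(2) w(1) by simp
    have lv: "length v = sum_list (map deg (concat (map snd ds)))"
      using proj_len(2)[of w] fmask_count[OF ds(1)] ds(2) w(2) by simp
    have we: "w = \<Phi> ds" unfolding \<Phi>_def ds(2) w(1,2)[symmetric] by (rule ilv_proj[symmetric])
    have "cF A1 (map fst ds) u \<and> cF A2 (concat (map snd ds)) v"
      using FM[OF ds(1) lu lv, of A1 A2] w(3) we unfolding \<Phi>_def by simp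
    moreover have "ds \<in> D" unfolding D_def by (rule good_Dset[OF wf ds(1)])
    ultimately have "ds \<in> X" by (simp add: X_def K1_def K2_def compat_rd)
    then show "w \<in> \<Phi> ` X" using we by blast
  qed
  have "card X = card Y" using card_image[OF inj] img by simp
  then show "(theta (rA (fl_sum A1 A2) f) p :: 'k) = rtensor A1 A2 (Delta S ar f) p" using L R' by simp
qed

end
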